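(* Let $n$ be a nonnegative integer and $0<\pi<1$. Let $T$ be the random variable with probability mass function $$P(T=t)=\sum_{k=0}^n \#\mathcal{P}_{k,n-k}(t)\,(1-\pi)^{n-k}\pi^k,\qquad t=0,1,\dots,\lfloor n^2/4\rfloor,$$ and $0$ otherwise. Then $$E(T)=\binom{n}{2}\pi(1-\pi),\qquad E(T^2)=\binom{n}{2}\pi(1-\pi)\left(\frac{2n-1}{3}+\binom{n-2}{2}\pi(1-\pi)\right),$$ and consequently $$V(T)=\binom{n}{2}\pi(1-\pi)\left(\frac{2n-1}{3}-\pi(1-\pi)(2n-3)\right).$$
   Context: For integers $k\ge0$ and $m$, $\#\mathcal{P}_{k,m}(t)$ denotes the number of integer tuples $(\lambda_1,\dots,\lambda_k)$ with $m\ge\lambda_1\ge\cdots\ge\lambda_k\ge0$ and $\lambda_1+\cdots+\lambda_k=t$. Interpretation: in $n$ independent Bernoulli trials each with success probability $\pi$, $T$ is the total, over all successes, of the number of failures occurring after that success (the number of pairs (success, later failure)). Binomial coefficients $\binom{a}{b}$ with $b>a\ge0$ or $b<0$ are $0$. *)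

theory Defs
  imports Complex_Main
begin

text \<open>Number of integer tuples (l_1,...,l_k) with m \<ge> l_1 \<ge> ... \<ge> l_k \<ge> 0 and sum t,
  represented as nat lists of length k sorted non-increasingly.\<close>
definition num_part :: "nat \<Rightarrow> nat \<Rightarrow> nat \<Rightarrow> nat" where
  "num_part k m t = card {l :: nat list. length l = k \<and> sorted_wrt (\<ge>) l \<and>
      (\<forall>x\<in>set l. x \<le> m) \<and> sum_list l = t}"

definition T_pmf :: "nat \<Rightarrow> real \<Rightarrow> nat \<Rightarrow> real" where
  "T_pmf n p t = (if t \<le> n^2 div 4
      then (\<Sum>k=0..n. real (num_part k (n - k) t) * (1 - p)^(n - k) * p^k) else 0)"

definition T_mean :: "nat \<Rightarrow> real \<Rightarrow> real" where
  "T_mean n p = (\<Sum>t=0..n^2 div 4. real t * T_pmf n p t)"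

definition T_second_moment :: "nat \<Rightarrow> real \<Rightarrow> real" where
  "T_second_moment n p = (\<Sum>t=0..n^2 div 4. (real t)^2 * T_pmf n p t)"

definition T_var :: "nat \<Rightarrow> real \<Rightarrow> real" where
  "T_var n p = T_second_moment n p - (T_mean n p)^2"

end

theory Submission
  imports Defs
begin


definition EE :: "real \<Rightarrow> (real \<Rightarrow> real \<Rightarrow> real) \<Rightarrow> nat \<Rightarrow> real" where
  "EE p g n = (\<Sum>k=0..n. real (n choose k) * p^k * (1-p)^(n-k) * g (real k) (real (n-k)))"

lemma EE_0: "EE p g 0 = g 0 0" by (simp add: EE_def)

lemma EE_Suc: "EE p g (Suc n) = p * EE p (\<lambda>a b. g (a+1) b) n + (1-p) * EE p (\<lambda>a b. g a (b+1)) n"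
proof -
  define q where "q = 1 - p"
  define f where "f k = real (Suc n choose k) * p^k * q^(Suc n-k) * g (real k) (real (Suc n-k))" for k
  define h where "h k = real (n choose k) * p^k * q^(Suc n - k) * g (real k) (real (Suc n - k))" for k
  have L: "EE p g (Suc n) = f 0 + (\<Sum>k=0..n. f (Suc k))"
    unfolding EE_def f_def q_def by (subst sum.atLeast0_atMost_Suc_shift) simp
  have fs: "f (Suc k) = p * (real (n choose k) * p^k * q^(n-k) * g (real k + 1) (real (n-k)))
     + h (Suc k)" for k
    by (simp add: f_def h_def algebra_simps)
  have A: "(\<Sum>k=0..n. f (Suc k)) = p * EE p (\<lambda>a b. g (a+1) b) n + (\<Sum>k=0..n. h (Suc k))"
    unfolding fs sum.distrib EE_def q_def by (simp add: sum_distrib_left)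
  have B: "(1-p) * EE p (\<lambda>a b. g a (b+1)) n = (\<Sum>k=0..n. h k)"
    unfolding EE_def sum_distrib_left
  proof (rule sum.cong)
    fix k assume "k \<in> {0..n}"
    then have kn: "k \<le> n" by simp
    then have "Suc n - k = Suc (n-k)" by (simp add: Suc_diff_le)
    then show "(1-p) * (real (n choose k) * p^k * (1-p)^(n-k) * g (real k) (real (n-k) + 1)) = h k"
      by (simp add: h_def q_def algebra_simps)
  qed simp
  have C: "(\<Sum>k=0..n. h k) = h 0 + (\<Sum>k=0..n. h (Suc k))"
  proof -
    have "(\<Sum>k=0..n. h k) = (\<Sum>k=0..Suc n. h k)"
      by (simp add: h_def)
    also have "\<dots> = h 0 + (\<Sum>k=0..n. h (Suc k))"
      by (subst sum.atLeast0_atMost_Suc_shift) simp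
    finally show ?thesis .
  qed
  have "f 0 = h 0" by (simp add: f_def h_def)
  then show ?thesis using L A B C by simp
qed

lemma EE_add: "EE p (\<lambda>a b. f a b + g a b) n = EE p f n + EE p g n"
  by (simp add: EE_def sum.distrib algebra_simps)
lemma EE_cmult: "EE p (\<lambda>a b. c * f a b) n = c * EE p f n"
  by (simp add: EE_def sum_distrib_left algebra_simps)

lemma e1: "EE p (\<lambda>a b. 1) n = 1"
  by (induction n) (simp_all add: EE_0 EE_Suc)

lemma ea: "EE p (\<lambda>a b. a) n = real n * p"
proof (induction n)
  case (Suc n)
  have "EE p (\<lambda>a b. a + 1) n = EE p (\<lambda>a b. a) n + EE p (\<lambda>a b. 1) n" by (rule EE_add)
  then show ?case using Suc by (simp add: EE_Suc e1 algebra_simps)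
qed (simp add: EE_0)

lemma EE_cong: "(\<And>a b. g a b = f a b) \<Longrightarrow> EE p g n = EE p f n"
  by (simp add: EE_def)

lemma eb: "EE p (\<lambda>a b. b) n = real n * (1-p)"
proof (induction n)
  case (Suc n)
  have "EE p (\<lambda>a b. b) (Suc n) = p * EE p (\<lambda>a b. b) n + (1-p) * EE p (\<lambda>a b. b+1) n"
    by (rule EE_Suc)
  moreover have "EE p (\<lambda>a b. b + 1) n = EE p (\<lambda>a b. b) n + EE p (\<lambda>a b. 1) n" by (rule EE_add)
  ultimately show ?case using Suc by (simp add: e1 algebra_simps)
qed (simp add: EE_0)

lemma eab: "EE p (\<lambda>a b. a*b) n = real n * (real n - 1) * p * (1-p)"
proof (induction n)
  case (Suc n)
  have "EE p (\<lambda>a b. a*b) (Suc n) = p * EE p (\<lambda>a b. (a+1)*b) n + (1-p) * EE p (\<lambda>a b. a*(b+1)) n"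
    by (rule EE_Suc)
  moreover have "EE p (\<lambda>a b. (a+1)*b) n = EE p (\<lambda>a b. a*b) n + EE p (\<lambda>a b. b) n"
    by (subst EE_add[symmetric], rule EE_cong) (simp add: algebra_simps)
  moreover have "EE p (\<lambda>a b. a*(b+1)) n = EE p (\<lambda>a b. a*b) n + EE p (\<lambda>a b. a) n"
    by (subst EE_add[symmetric], rule EE_cong) (simp add: algebra_simps)
  ultimately show ?case by (simp only: Suc.IH ea eb) (simp add: algebra_simps)
qed (simp add: EE_0)

lemma ea2: "EE p (\<lambda>a b. a^2) n = real n * p + real n * (real n - 1) * p^2"
proof (induction n)
  case (Suc n)
  have "EE p (\<lambda>a b. a^2) (Suc n) = p * EE p (\<lambda>a b. (a+1)^2) n + (1-p) * EE p (\<lambda>a b. a^2) n"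
    by (rule EE_Suc)
  moreover have "EE p (\<lambda>a b. (a+1)^2) n = EE p (\<lambda>a b. a^2) n + (2 * EE p (\<lambda>a b. a) n + EE p (\<lambda>a b. 1) n)"
    by (subst EE_cmult[symmetric], subst EE_add[symmetric], subst EE_add[symmetric], rule EE_cong) (simp add: algebra_simps power2_eq_square)
  ultimately show ?case by (simp only: Suc.IH ea e1) (simp add: algebra_simps power2_eq_square)
qed (simp add: EE_0)

lemma eb2: "EE p (\<lambda>a b. b^2) n = real n * (1-p) + real n * (real n - 1) * (1-p)^2"
proof (induction n)
  case (Suc n)
  have "EE p (\<lambda>a b. b^2) (Suc n) = p * EE p (\<lambda>a b. b^2) n + (1-p) * EE p (\<lambda>a b. (b+1)^2) n"
    by (rule EE_Suc)
  moreover have "EE p (\<lambda>a b. (b+1)^2) n = EE p (\<lambda>a b. b^2) n + (2 * EE p (\<lambda>a b. b) n + EE p (\<lambda>a b. 1) n)"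
    by (subst EE_cmult[symmetric], subst EE_add[symmetric], subst EE_add[symmetric], rule EE_cong) (simp add: algebra_simps power2_eq_square)
  ultimately show ?case by (simp only: Suc.IH eb e1) (simp add: algebra_simps power2_eq_square)
qed (simp add: EE_0)


lemma ea2b: "EE p (\<lambda>a b. a^2*b) n = real n * (real n - 1) * (real n - 2) * p^2 * (1-p) + real n * (real n - 1) * p * (1-p)"
proof (induction n)
  case (Suc n)
  have "EE p (\<lambda>a b. a^2*b) (Suc n) = p * EE p (\<lambda>a b. (a+1)^2*b) n + (1-p) * EE p (\<lambda>a b. a^2*(b+1)) n"
    by (rule EE_Suc)
  moreover have "EE p (\<lambda>a b. (a+1)^2*b) n = EE p (\<lambda>a b. a^2*b) n + (2 * EE p (\<lambda>a b. a*b) n + EE p (\<lambda>a b. b) n)"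
    by (subst EE_cmult[symmetric], subst EE_add[symmetric], subst EE_add[symmetric], rule EE_cong) (simp add: algebra_simps power2_eq_square)
  moreover have "EE p (\<lambda>a b. a^2*(b+1)) n = EE p (\<lambda>a b. a^2*b) n + EE p (\<lambda>a b. a^2) n"
    by (subst EE_add[symmetric], rule EE_cong) (simp add: algebra_simps power2_eq_square)
  ultimately show ?case by (simp only: Suc.IH eab eb ea2) (simp add: algebra_simps power2_eq_square)
qed (simp add: EE_0)

lemma eab2: "EE p (\<lambda>a b. a*b^2) n = real n * (real n - 1) * (real n - 2) * p * (1-p)^2 + real n * (real n - 1) * p * (1-p)"
proof (induction n)
  case (Suc n)
  have "EE p (\<lambda>a b. a*b^2) (Suc n) = p * EE p (\<lambda>a b. (a+1)*b^2) n + (1-p) * EE p (\<lambda>a b. a*(b+1)^2) n"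
    by (rule EE_Suc)
  moreover have "EE p (\<lambda>a b. a*(b+1)^2) n = EE p (\<lambda>a b. a*b^2) n + (2 * EE p (\<lambda>a b. a*b) n + EE p (\<lambda>a b. a) n)"
    by (subst EE_cmult[symmetric], subst EE_add[symmetric], subst EE_add[symmetric], rule EE_cong) (simp add: algebra_simps power2_eq_square)
  moreover have "EE p (\<lambda>a b. (a+1)*b^2) n = EE p (\<lambda>a b. a*b^2) n + EE p (\<lambda>a b. b^2) n"
    by (subst EE_add[symmetric], rule EE_cong) (simp add: algebra_simps power2_eq_square)
  ultimately show ?case by (simp only: Suc.IH eab ea eb2) (simp add: algebra_simps power2_eq_square)
qed (simp add: EE_0)

lemma ea2b2: "EE p (\<lambda>a b. a^2*b^2) n = real n * (real n - 1) * (real n - 2) * (real n - 3) * p^2 * (1-p)^2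
   + real n * (real n - 1) * (real n - 2) * p * (1-p) + real n * (real n - 1) * p * (1-p)"
proof (induction n)
  case (Suc n)
  have "EE p (\<lambda>a b. a^2*b^2) (Suc n) = p * EE p (\<lambda>a b. (a+1)^2*b^2) n + (1-p) * EE p (\<lambda>a b. a^2*(b+1)^2) n"
    by (rule EE_Suc)
  moreover have "EE p (\<lambda>a b. (a+1)^2*b^2) n = EE p (\<lambda>a b. a^2*b^2) n + (2 * EE p (\<lambda>a b. a*b^2) n + EE p (\<lambda>a b. b^2) n)"
    by (subst EE_cmult[symmetric], subst EE_add[symmetric], subst EE_add[symmetric], rule EE_cong) (simp add: algebra_simps power2_eq_square)
  moreover have "EE p (\<lambda>a b. a^2*(b+1)^2) n = EE p (\<lambda>a b. a^2*b^2) n + (2 * EE p (\<lambda>a b. a^2*b) n + EE p (\<lambda>a b. a^2) n)"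
    by (subst EE_cmult[symmetric], subst EE_add[symmetric], subst EE_add[symmetric], rule EE_cong) (simp add: algebra_simps power2_eq_square)
  ultimately show ?case by (simp only: Suc.IH eab2 ea2b eb2 ea2) (simp add: algebra_simps power2_eq_square)
qed (simp add: EE_0)



definition LS :: "nat \<Rightarrow> nat \<Rightarrow> nat list set" where
  "LS k m = {l. length l = k \<and> sorted_wrt (\<ge>) l \<and> (\<forall>x\<in>set l. x \<le> m)}"

definition MM :: "nat \<Rightarrow> nat \<Rightarrow> nat \<Rightarrow> real" where
  "MM j k m = (\<Sum>l\<in>LS k m. real (sum_list l) ^ j)"

lemma LS_finite: "finite (LS k m)"
proof -
  have "LS k m \<subseteq> {xs. set xs \<subseteq> {0..m} \<and> length xs = k}" unfolding LS_def by auto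
  then show ?thesis using finite_lists_length_eq[of "{0..m}" k] finite_subset by blast
qed

lemma LS_0: "LS 0 m = {[]}" unfolding LS_def by auto

lemma LS_m0: "LS k 0 = {replicate k 0}"
  unfolding LS_def
proof safe
  fix l :: "nat list" assume "\<forall>x\<in>set l. x \<le> 0"
  then show "l = replicate (length l) 0" by (simp add: replicate_length_same)
qed (auto simp: sorted_wrt_iff_nth_less)

lemma LS_Suc: "LS (Suc k) (Suc m) = LS (Suc k) m \<union> (Cons (Suc m)) ` LS k (Suc m)"
proof safe
  fix l assume l: "l \<in> LS (Suc k) (Suc m)" "l \<notin> (#) (Suc m) ` LS k (Suc m)"
  then obtain x xs where lx: "l = x # xs" unfolding LS_def by (cases l) auto
  show "l \<in> LS (Suc k) m"
  proof (cases "x = Suc m")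
    case True
    then have "xs \<in> LS k (Suc m)" using l lx unfolding LS_def by auto
    then show ?thesis using l lx True by auto
  next
    case False
    then have "x \<le> m" using l lx unfolding LS_def by auto
    then show ?thesis using l lx unfolding LS_def by auto
  qed
next
  fix l assume "l \<in> LS (Suc k) m" then show "l \<in> LS (Suc k) (Suc m)" unfolding LS_def by auto
next
  fix l assume "l \<in> LS k (Suc m)" then show "Suc m # l \<in> LS (Suc k) (Suc m)" unfolding LS_def by auto
qed

lemma LS_disj: "LS (Suc k) m \<inter> (Cons (Suc m)) ` LS k (Suc m) = {}"
  unfolding LS_def by auto

lemma MM_Suc: "MM j (Suc k) (Suc m) = MM j (Suc k) m + (\<Sum>l\<in>LS k (Suc m). (real (Suc m) + real (sum_list l)) ^ j)"
proof -
  have "MM j (Suc k) (Suc m) = MM j (Suc k) m + (\<Sum>l\<in>(Cons (Suc m)) ` LS k (Suc m). real (sum_list l) ^ j)"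
    unfolding MM_def LS_Suc by (rule sum.union_disjoint) (use LS_finite LS_disj in auto)
  also have "(\<Sum>l\<in>(Cons (Suc m)) ` LS k (Suc m). real (sum_list l) ^ j) = (\<Sum>l\<in>LS k (Suc m). (real (Suc m) + real (sum_list l)) ^ j)"
    by (subst sum.reindex) (auto simp: inj_on_def ac_simps)
  finally show ?thesis .
qed

lemma MM_0: "MM j 0 m = (if j = 0 then 1 else 0)" by (simp add: MM_def LS_0)
lemma MM_m0: "MM j k 0 = (if j = 0 then 1 else 0)" by (simp add: MM_def LS_m0)

lemma MM_closed:
  "MM 0 k m = real ((k+m) choose k) \<and>
   MM 1 k m = real ((k+m) choose k) * real k * real m / 2 \<and>
   MM 2 k m = real ((k+m) choose k) * (real k * real m * (real k + real m + 1) / 12 + (real k)^2 * (real m)^2 / 4)"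
proof (induction k arbitrary: m)
  case 0
  then show ?case by (simp add: MM_0)
next
  case (Suc k)
  note outer = Suc.IH
  show ?case
  proof (induction m)
    case 0
    then show ?case by (simp add: MM_m0)
  next
    case (Suc m)
    note I1 = Suc.IH and I2 = outer[of "Suc m"]
    define c where "c = real ((k + Suc m) choose k)"
    define a where "a = real ((Suc k + m) choose Suc k)"
    have pas: "real ((Suc k + Suc m) choose Suc k) = a + c"
      unfolding a_def c_def by (simp add: add_ac)
    have rel0: "Suc k * ((k + Suc m) choose Suc k) = Suc m * ((k + Suc m) choose k)"
      using binomial_absorption[of k "k + Suc m"] binomial_absorb_comp[of "k + Suc m" k] by simp
    have rel: "a * (real k + 1) = c * (real m + 1)"
    proof -
      have "real (Suc k * ((k + Suc m) choose Suc k)) = real (Suc m * ((k + Suc m) choose k))"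
        using rel0 by metis
      then show ?thesis unfolding a_def c_def by (simp add: algebra_simps)
    qed
    have aeq: "a = c * (real m + 1) / (real k + 1)"
      using rel by (simp add: field_simps)
    let ?s = "\<lambda>l. real (sum_list l)"
    have S0: "MM 0 k (Suc m) = c" and S1: "MM 1 k (Suc m) = c * real k * (real m + 1) / 2"
      and S2: "MM 2 k (Suc m) = c * (real k * (real m + 1) * (real k + real m + 2) / 12 + (real k)^2 * (real m + 1)^2 / 4)"
      using I2 unfolding c_def by (simp_all add: algebra_simps)
    have T0: "MM 0 (Suc k) m = a" and T1: "MM 1 (Suc k) m = a * (real k + 1) * real m / 2"
      and T2: "MM 2 (Suc k) m = a * ((real k + 1) * real m * (real k + real m + 2) / 12 + (real k + 1)^2 * (real m)^2 / 4)"
      using I1 unfolding a_def by (simp_all add: algebra_simps)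
    have card: "real (card (LS k (Suc m))) = MM 0 k (Suc m)" by (simp add: MM_def)
    have U0: "MM 0 (Suc k) (Suc m) = MM 0 (Suc k) m + MM 0 k (Suc m)"
      by (subst MM_Suc) (simp add: MM_def)
    have U1: "MM 1 (Suc k) (Suc m) = MM 1 (Suc k) m + (real m + 1) * MM 0 k (Suc m) + MM 1 k (Suc m)"
      by (subst MM_Suc) (simp add: MM_def sum.distrib algebra_simps)
    have U2: "MM 2 (Suc k) (Suc m) = MM 2 (Suc k) m + (real m + 1)^2 * MM 0 k (Suc m) + 2 * (real m + 1) * MM 1 k (Suc m) + MM 2 k (Suc m)"
      by (subst MM_Suc) (simp add: MM_def sum.distrib power2_sum sum_distrib_left algebra_simps)
    show ?case
      unfolding U0 U1 U2 S0 S1 S2 T0 T1 T2 pas aeq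
      by (simp add: field_simps power2_eq_square)
  qed
qed



lemma sum_list_bound: "\<forall>x\<in>set l. x \<le> m \<Longrightarrow> sum_list l \<le> length l * m"
  by (induction l) auto

lemma box: "(k::nat) \<le> n \<Longrightarrow> k * (n - k) \<le> n^2 div 4"
proof -
  assume kn: "k \<le> n"
  define m where "m = n - k"
  have n: "n = k + m" using kn by (simp add: m_def)
  have "4 * (k * m) \<le> (k + m)^2"
  proof (cases "k \<le> m")
    case True
    define d where "d = m - k"
    have d: "m = k + d" using True by (simp add: d_def)
    have "(k + m)^2 = 4 * (k * m) + d^2" unfolding d by (simp add: power2_eq_square algebra_simps)
    then show ?thesis by linarith
  next
    case False
    define d where "d = k - m"
    have d: "k = m + d" using False by (simp add: d_def)
    have "(k + m)^2 = 4 * (k * m) + d^2" unfolding d by (simp add: power2_eq_square algebra_simps)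
    then show ?thesis by linarith
  qed
  then have "k * m \<le> (k + m)^2 div 4" by simp
  moreover have "n - k = m" using n by simp
  ultimately show ?thesis unfolding n by simp
qed

lemma fiber: assumes "k \<le> n"
  shows "(\<Sum>t=0..n^2 div 4. real t ^ j * real (num_part k (n-k) t)) = MM j k (n-k)"
proof -
  let ?S = "LS k (n-k)"
  have np: "num_part k (n-k) t = card {l\<in>?S. sum_list l = t}" for t
    unfolding num_part_def LS_def by (rule arg_cong[where f=card]) auto
  have "(\<Sum>t=0..n^2 div 4. real t ^ j * real (num_part k (n-k) t))
      = (\<Sum>t=0..n^2 div 4. (\<Sum>l\<in>{l\<in>?S. sum_list l = t}. real (sum_list l) ^ j))"
    by (rule sum.cong) (simp_all add: np)
  also have "\<dots> = MM j k (n-k)" unfolding MM_def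
  proof (rule sum.group)
    show "finite ?S" by (rule LS_finite)
    show "sum_list ` ?S \<subseteq> {0..n^2 div 4}"
    proof
      fix s assume "s \<in> sum_list ` ?S"
      then obtain l where "l \<in> ?S" "s = sum_list l" by blast
      then have "s \<le> k * (n-k)" using sum_list_bound[of l "n-k"] unfolding LS_def by auto
      then show "s \<in> {0..n^2 div 4}" using box[OF assms] by simp
    qed
  qed simp
  finally show ?thesis .
qed

lemma moment: "(\<Sum>t=0..n^2 div 4. real t ^ j * T_pmf n p t) = (\<Sum>k=0..n. MM j k (n-k) * (1-p)^(n-k) * p^k)"
proof -
  have "(\<Sum>t=0..n^2 div 4. real t ^ j * T_pmf n p t)
     = (\<Sum>t=0..n^2 div 4. \<Sum>k=0..n. (real t ^ j * real (num_part k (n - k) t)) * ((1 - p)^(n - k) * p^k))"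
    by (rule sum.cong) (simp_all add: T_pmf_def sum_distrib_left mult_ac)
  also have "\<dots> = (\<Sum>k=0..n. \<Sum>t=0..n^2 div 4. (real t ^ j * real (num_part k (n - k) t)) * ((1 - p)^(n - k) * p^k))"
    by (rule sum.swap)
  also have "\<dots> = (\<Sum>k=0..n. MM j k (n-k) * ((1-p)^(n-k) * p^k))"
    by (rule sum.cong) (simp_all add: sum_distrib_right[symmetric] fiber)
  finally show ?thesis by (simp add: mult_ac)
qed

lemma moment_EE:
  assumes "\<And>k m. MM j k m = real ((k+m) choose k) * g (real k) (real m)"
  shows "(\<Sum>t=0..n^2 div 4. real t ^ j * T_pmf n p t) = EE p g n"
  unfolding moment EE_def
  by (rule sum.cong) (simp_all add: assms mult_ac)

lemma choose2: "real (n choose 2) = real n * (real n - 1) / 2"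
proof -
  have "Suc 1 * (n choose Suc 1) = n * ((n - 1) choose 1)" by (rule binomial_absorption)
  then have "2 * (n choose 2) = n * (n - 1)" by (simp add: numeral_2_eq_2)
  then have h: "2 * real (n choose 2) = real n * real (n - 1)" by (metis of_nat_mult of_nat_numeral)
  show ?thesis
  proof (cases n)
    case (Suc m)
    then have "real (n - 1) = real n - 1" by simp
    then have "2 * real (n choose 2) = real n * (real n - 1)" using h by simp
    then show ?thesis by linarith
  qed simp
qed


lemma MM1: "MM (Suc 0) k m = real ((k+m) choose k) * real k * real m / 2"
  using MM_closed[of k m] by simp

lemma mean_EE: "T_mean n p = (1/2) * EE p (\<lambda>a b. a*b) n"
proof -
  have "T_mean n p = (\<Sum>t=0..n^2 div 4. real t ^ 1 * T_pmf n p t)" by (simp add: T_mean_def)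
  also have "\<dots> = EE p (\<lambda>a b. (1/2) * (a*b)) n"
    by (rule moment_EE) (simp add: MM1)
  also have "\<dots> = (1/2) * EE p (\<lambda>a b. a*b) n" by (rule EE_cmult)
  finally show ?thesis .
qed

lemma second_EE: "T_second_moment n p = (1/12) * EE p (\<lambda>a b. a^2*b) n + ((1/12) * EE p (\<lambda>a b. a*b^2) n
   + ((1/12) * EE p (\<lambda>a b. a*b) n + (1/4) * EE p (\<lambda>a b. a^2*b^2) n))"
proof -
  have "T_second_moment n p = (\<Sum>t=0..n^2 div 4. real t ^ 2 * T_pmf n p t)" by (simp add: T_second_moment_def)
  also have "\<dots> = EE p (\<lambda>a b. (1/12) * (a^2*b) + ((1/12) * (a*b^2) + ((1/12) * (a*b) + (1/4) * (a^2*b^2)))) n"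
    by (rule moment_EE) (simp add: MM_closed algebra_simps power2_eq_square)
  also have "\<dots> = (1/12) * EE p (\<lambda>a b. a^2*b) n + ((1/12) * EE p (\<lambda>a b. a*b^2) n
   + ((1/12) * EE p (\<lambda>a b. a*b) n + (1/4) * EE p (\<lambda>a b. a^2*b^2) n))"
    by (simp only: EE_add EE_cmult)
  finally show ?thesis .
qed

theorem theorem2:
  fixes n :: nat and p :: real
  assumes "0 < p" and "p < 1"
  shows "T_mean n p = real (n choose 2) * p * (1 - p) \<and>
         T_second_moment n p = real (n choose 2) * p * (1 - p) *
           ((2 * real n - 1) / 3 + real ((n - 2) choose 2) * p * (1 - p)) \<and>
         T_var n p = real (n choose 2) * p * (1 - p) *
           ((2 * real n - 1) / 3 - p * (1 - p) * (2 * real n - 3))"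
proof -
  have M: "T_mean n p = real (n choose 2) * p * (1 - p)"
    unfolding mean_EE eab choose2 by (simp add: field_simps)
  have S0: "T_second_moment n p = real n * (real n - 1) * p * (1-p) * (2 * real n - 1) / 6
      + real n * (real n - 1) * (real n - 2) * (real n - 3) * p^2 * (1-p)^2 / 4"
    unfolding second_EE eab ea2b eab2 ea2b2 by (simp add: field_simps power2_eq_square; simp add: algebra_simps)
  have C2: "real (n choose 2) * real ((n - 2) choose 2) = real n * (real n - 1) * (real n - 2) * (real n - 3) / 4"
  proof (cases "n \<ge> 2")
    case True
    then have r: "real (n - 2) = real n - 2" by simp
    show ?thesis unfolding choose2[of n] choose2[of "n-2"] r by (simp add: field_simps)
  next
    case False
    then have "n = 0 \<or> n = 1" by auto
    then show ?thesis by auto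
  qed
  have S: "T_second_moment n p = real (n choose 2) * p * (1 - p) *
           ((2 * real n - 1) / 3 + real ((n - 2) choose 2) * p * (1 - p))"
  proof -
    have "real (n choose 2) * p * (1 - p) * ((2 * real n - 1) / 3 + real ((n - 2) choose 2) * p * (1 - p))
      = real (n choose 2) * p * (1 - p) * (2 * real n - 1) / 3 + (real (n choose 2) * real ((n - 2) choose 2)) * p^2 * (1-p)^2"
      by (simp add: field_simps power2_eq_square)
    also have "\<dots> = real n * (real n - 1) * p * (1-p) * (2 * real n - 1) / 6
      + real n * (real n - 1) * (real n - 2) * (real n - 3) * p^2 * (1-p)^2 / 4"
      unfolding C2 by (simp add: choose2 field_simps)
    finally show ?thesis using S0 by simp
  qed
  have V: "T_var n p = real (n choose 2) * p * (1 - p) *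
           ((2 * real n - 1) / 3 - p * (1 - p) * (2 * real n - 3))"
  proof -
    define q where "q = 1 - p"
    define c where "c = real (n choose 2)"
    define d where "d = real ((n - 2) choose 2)"
    have cd: "c * (d - c) = c * (-(2 * real n - 3))"
    proof -
      have "c * (d - c) = c * d - c * c" by (simp add: algebra_simps)
      also have "\<dots> = real n * (real n - 1) * (real n - 2) * (real n - 3) / 4 - (real n * (real n - 1) / 2) * (real n * (real n - 1) / 2)"
        unfolding c_def d_def C2 by (simp only: choose2)
      also have "\<dots> = c * (-(2 * real n - 3))" unfolding c_def choose2 by (simp add: field_simps)
      finally show ?thesis .
    qed
    have "T_var n p = (c*p*q) * ((2 * real n - 1) / 3 + d * p * q) - (c*p*q)^2"
      unfolding T_var_def S M c_def d_def q_def ..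
    also have "\<dots> = c*p*q*(2 * real n - 1) / 3 + (c * (d - c)) * (p*q) * (p*q)"
      by (simp add: algebra_simps power2_eq_square)
    also have "\<dots> = c*p*q*(2 * real n - 1) / 3 + (c * (-(2 * real n - 3))) * (p*q) * (p*q)"
      unfolding cd ..
    also have "\<dots> = c * p * q * ((2 * real n - 1) / 3 - p * q * (2 * real n - 3))"
      by (simp add: algebra_simps)
    finally show ?thesis unfolding c_def q_def .
  qed
  show ?thesis using M S V by (intro conjI)
qed

end
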